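(* Let $A,B\in\mathcal{F}_k$ be commonly ordered configurations of $k$ robots. There exists a feasible schedule from $A$ to $B$ with makespan $d(A,B)$ in which each robot makes at most one turn.
   Context: Robots are axis-parallel unit squares: a robot at $p$ occupies $p+\boxdot$, $\boxdot=\{q:\|q\|_\infty\le1/2\}$. Distances use the $L_1$ norm $\|p\|=|x(p)|+|y(p)|$. A configuration of $k$ robots is a tuple $(p_1,\dots,p_k)$ with $\|p_i-p_j\|_\infty\ge 1$ for $i\ne j$; $\mathcal{F}_k$ is their set. A trajectory from $a$ to $b$ over $T=[t_0,t_1]$ is a $1$-Lipschitz (w.r.t. $L_1$) map $m:T\to\mathbb{R}^2$, $m(t_0)=a$, $m(t_1)=b$, whose image is a polygonal chain; a turn is a point of the image where two segments of different orientations meet. A schedule $M=(m_1,\dots,m_k)$ over $T$ is feasible if $M(t)\in\mathcal{F}_k$ for all $t$; its makespan is $t_1-t_0$. The diameter is $d(A,B)=\max_i\|a_i-b_i\|$. An ordering of $k$ robots assigns to each pair $i<j$ one of the four relations $x(p_i)\ge x(p_j)+1$, $x(p_j)\ge x(p_i)+1$, $y(p_i)\ge y(p_j)+1$, $y(p_j)\ge y(p_i)+1$; a configuration lies in the ordering if it satisfies all the assigned relations. Two configurations are commonly ordered if they lie in a common ordering. *)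

theory Defs
  imports "HOL-Analysis.Analysis"
begin

type_synonym point = "real \<times> real"

definition l1 :: "point \<Rightarrow> real" where
  "l1 p = \<bar>fst p\<bar> + \<bar>snd p\<bar>"

definition linf :: "point \<Rightarrow> real" where
  "linf p = max \<bar>fst p\<bar> \<bar>snd p\<bar>"

text \<open>Configurations of k robots: maps from indices {0..<k} to points
  (values at indices \<ge> k are irrelevant).\<close>
definition config :: "nat \<Rightarrow> (nat \<Rightarrow> point) \<Rightarrow> bool" where
  "config k P \<longleftrightarrow> (\<forall>i<k. \<forall>j<k. i \<noteq> j \<longrightarrow> linf (P i - P j) \<ge> 1)"

definition diam :: "nat \<Rightarrow> (nat \<Rightarrow> point) \<Rightarrow> (nat \<Rightarrow> point) \<Rightarrow> real" where
  "diam k A B = Max (insert 0 {l1 (A i - B i) | i. i < k})"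

datatype rel = XGe | XLe | YGe | YLe

fun rel_holds :: "rel \<Rightarrow> point \<Rightarrow> point \<Rightarrow> bool" where
  "rel_holds XGe p q \<longleftrightarrow> fst p \<ge> fst q + 1"
| "rel_holds XLe p q \<longleftrightarrow> fst q \<ge> fst p + 1"
| "rel_holds YGe p q \<longleftrightarrow> snd p \<ge> snd q + 1"
| "rel_holds YLe p q \<longleftrightarrow> snd q \<ge> snd p + 1"

definition lies_in :: "nat \<Rightarrow> (nat \<Rightarrow> nat \<Rightarrow> rel) \<Rightarrow> (nat \<Rightarrow> point) \<Rightarrow> bool" where
  "lies_in k ord P \<longleftrightarrow> (\<forall>i j. i < j \<and> j < k \<longrightarrow> rel_holds (ord i j) (P i) (P j))"

definition commonly_ordered :: "nat \<Rightarrow> (nat \<Rightarrow> point) \<Rightarrow> (nat \<Rightarrow> point) \<Rightarrow> bool" where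
  "commonly_ordered k A B \<longleftrightarrow> (\<exists>ord. lies_in k ord A \<and> lies_in k ord B)"

definition traj_one_turn :: "real \<Rightarrow> real \<Rightarrow> (real \<Rightarrow> point) \<Rightarrow> point \<Rightarrow> point \<Rightarrow> bool" where
  "traj_one_turn t0 t1 m a b \<longleftrightarrow>
     m t0 = a \<and> m t1 = b \<and>
     (\<forall>s\<in>{t0..t1}. \<forall>t\<in>{t0..t1}. l1 (m s - m t) \<le> \<bar>s - t\<bar>) \<and>
     (\<exists>c. m ` {t0..t1} = closed_segment a c \<union> closed_segment c b)"

definition feasible :: "nat \<Rightarrow> real \<Rightarrow> real \<Rightarrow> (nat \<Rightarrow> real \<Rightarrow> point) \<Rightarrow> bool" where
  "feasible k t0 t1 M \<longleftrightarrow> (\<forall>t\<in>{t0..t1}. config k (\<lambda>i. M i t))"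

end

theory Submission
  imports Defs
begin

lemma conv_ge1:
  fixes u v l :: real
  assumes "u \<ge> 1" "v \<ge> 1" "0 \<le> l" "l \<le> 1"
  shows "(1 - l) * u + l * v \<ge> 1"
proof -
  have "(1 - l) * u \<ge> (1 - l) * 1" using assms by (intro mult_left_mono) auto
  moreover have "l * v \<ge> l * 1" using assms by (intro mult_left_mono) auto
  ultimately show ?thesis by simp
qed

lemma rel_conv:
  assumes "rel_holds r p q" "rel_holds r p' q'" "0 \<le> l" "l \<le> 1"
  shows "rel_holds r (p + l *\<^sub>R (p' - p)) (q + l *\<^sub>R (q' - q))"
proof (cases r)
  case XGe
  then have "(1 - l) * (fst p - fst q) + l * (fst p' - fst q') \<ge> 1"
    using assms by (intro conv_ge1) auto
  then show ?thesis using XGe by (simp add: algebra_simps)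
next
  case XLe
  then have "(1 - l) * (fst q - fst p) + l * (fst q' - fst p') \<ge> 1"
    using assms by (intro conv_ge1) auto
  then show ?thesis using XLe by (simp add: algebra_simps)
next
  case YGe
  then have "(1 - l) * (snd p - snd q) + l * (snd p' - snd q') \<ge> 1"
    using assms by (intro conv_ge1) auto
  then show ?thesis using YGe by (simp add: algebra_simps)
next
  case YLe
  then have "(1 - l) * (snd q - snd p) + l * (snd q' - snd p') \<ge> 1"
    using assms by (intro conv_ge1) auto
  then show ?thesis using YLe by (simp add: algebra_simps)
qed

lemma rel_linf: "rel_holds r p q \<Longrightarrow> linf (p - q) \<ge> 1"
  by (cases r) (auto simp: linf_def)

lemma linf_sym: "linf (p - q) = linf (q - p)"
  by (simp add: linf_def abs_minus_commute)

lemma l1_sym: "l1 (p - q) = l1 (q - p)"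
  by (simp add: l1_def abs_minus_commute)

lemma l1_scale: "l1 (c *\<^sub>R v) = \<bar>c\<bar> * l1 v"
  by (simp add: l1_def abs_mult algebra_simps)

lemma diam_ge: "i < k \<Longrightarrow> l1 (A i - B i) \<le> diam k A B"
  unfolding diam_def
proof -
  assume "i < k"
  have fin: "finite {l1 (A i - B i) | i. i < k}"
    using finite_imageI[of "{..<k}" "\<lambda>i. l1 (A i - B i)"] by (simp add: setcompr_eq_image)
  show "l1 (A i - B i) \<le> Max (insert 0 {l1 (A i - B i) |i. i < k})"
    using fin \<open>i < k\<close> by (intro Max_ge) auto
qed

lemma diam_nonneg: "0 \<le> diam k A B"
proof -
  have fin: "finite {l1 (A i - B i) | i. i < k}"
    using finite_imageI[of "{..<k}" "\<lambda>i. l1 (A i - B i)"] by (simp add: setcompr_eq_image)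
  show ?thesis unfolding diam_def using fin by (intro Max_ge) auto
qed

lemma l1_zero: "l1 v \<le> 0 \<Longrightarrow> v = 0"
proof -
  assume h: "l1 v \<le> 0"
  have "fst v = 0" "snd v = 0" using h by (auto simp: l1_def)
  then show "v = 0" by (simp add: prod_eq_iff)
qed

lemma image_seg:
  fixes a b :: point and D :: real
  assumes "D > 0"
  shows "(\<lambda>t. a + (t / D) *\<^sub>R (b - a)) ` {0..D} = closed_segment a b"
proof
  show "(\<lambda>t. a + (t / D) *\<^sub>R (b - a)) ` {0..D} \<subseteq> closed_segment a b"
  proof
    fix x assume "x \<in> (\<lambda>t. a + (t / D) *\<^sub>R (b - a)) ` {0..D}"
    then obtain t where t: "t \<in> {0..D}" "x = a + (t / D) *\<^sub>R (b - a)" by auto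
    have "0 \<le> t / D" "t / D \<le> 1" using t assms by auto
    moreover have "x = (1 - t / D) *\<^sub>R a + (t / D) *\<^sub>R b" using t by (simp add: algebra_simps)
    ultimately show "x \<in> closed_segment a b" unfolding closed_segment_def by blast
  qed
next
  show "closed_segment a b \<subseteq> (\<lambda>t. a + (t / D) *\<^sub>R (b - a)) ` {0..D}"
  proof
    fix x assume "x \<in> closed_segment a b"
    then obtain u where u: "0 \<le> u" "u \<le> 1" "x = (1 - u) *\<^sub>R a + u *\<^sub>R b"
      unfolding closed_segment_def by blast
    have "u * D \<in> {0..D}" using u assms by (auto simp: mult_le_cancel_right1)
    moreover have "x = a + ((u * D) / D) *\<^sub>R (b - a)" using u assms by (simp add: algebra_simps)
    ultimately show "x \<in> (\<lambda>t. a + (t / D) *\<^sub>R (b - a)) ` {0..D}" by blast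
  qed
qed

theorem lemma5p2:
  fixes k :: nat and A B :: "nat \<Rightarrow> point"
  assumes "config k A" and "config k B"
    and "commonly_ordered k A B"
  shows "\<exists>t0 t1 M. t1 - t0 = diam k A B \<and> feasible k t0 t1 M \<and>
           (\<forall>i<k. traj_one_turn t0 t1 (M i) (A i) (B i))"
proof -
  define D where "D = diam k A B"
  obtain ord where o1: "lies_in k ord A" and o2: "lies_in k ord B"
    using assms(3) unfolding commonly_ordered_def by blast
  define M where "M = (\<lambda>i t. A i + (t / D) *\<^sub>R (B i - A i))"
  have D0: "D \<ge> 0" unfolding D_def by (rule diam_nonneg)
  have feas: "feasible k 0 D M"
    unfolding feasible_def config_def
  proof (intro ballI allI impI)
    fix t i j assume t: "t \<in> {0..D}" and ij: "i < k" "j < k" "i \<noteq> j"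
    have l: "0 \<le> t / D" "t / D \<le> 1" using t D0 by (auto simp: divide_le_eq_1)
    have key: "linf (M i t - M j t) \<ge> 1" if "i < j" "j < k" for i j
    proof -
      have "rel_holds (ord i j) (A i) (A j)" "rel_holds (ord i j) (B i) (B j)"
        using o1 o2 that unfolding lies_in_def by auto
      from rel_conv[OF this l] show ?thesis unfolding M_def by (rule rel_linf)
    qed
    show "1 \<le> linf (M i t - M j t)"
    proof (cases "i < j")
      case True then show ?thesis using key ij by auto
    next
      case False then have "j < i" using ij by auto
      then show ?thesis using key[of j i] ij linf_sym by auto
    qed
  qed
  have traj: "traj_one_turn 0 D (M i) (A i) (B i)" if "i < k" for i
  proof -
    have le: "l1 (A i - B i) \<le> D" unfolding D_def using that by (rule diam_ge)
    have end1: "M i D = B i"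
    proof (cases "D = 0")
      case True
      then have "A i - B i = 0" using le True by (intro l1_zero) simp
      then have "A i = B i" by simp
      then show ?thesis using True by (simp add: M_def)
    next
      case False then show ?thesis by (simp add: M_def)
    qed
    have lip: "l1 (M i s - M i t) \<le> \<bar>s - t\<bar>" if "s \<in> {0..D}" "t \<in> {0..D}" for s t
    proof (cases "D = 0")
      case True then show ?thesis by (simp add: M_def l1_def)
    next
      case False
      have "M i s - M i t = ((s - t) / D) *\<^sub>R (B i - A i)"
        by (simp add: M_def algebra_simps diff_divide_distrib)
      then have "l1 (M i s - M i t) = \<bar>s - t\<bar> / D * l1 (A i - B i)"
        using D0 by (simp add: l1_scale l1_sym)
      also have "\<dots> \<le> \<bar>s - t\<bar> / D * D"
        using le D0 by (intro mult_left_mono) auto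
      also have "\<dots> = \<bar>s - t\<bar>" using False by simp
      finally show ?thesis .
    qed
    have img: "M i ` {0..D} = closed_segment (A i) (A i) \<union> closed_segment (A i) (B i)"
    proof (cases "D = 0")
      case True
      then have "A i - B i = 0" using le True by (intro l1_zero) simp
      then show ?thesis using True by (auto simp: M_def)
    next
      case False
      then show ?thesis using D0 image_seg[of D "A i" "B i"] by (auto simp: M_def)
    qed
    have st: "M i 0 = A i" by (simp add: M_def)
    show ?thesis unfolding traj_one_turn_def
      using st end1 lip img by blast
  qed
  show ?thesis
    apply (rule exI[of _ 0], rule exI[of _ D], rule exI[of _ M])
    using feas traj D_def by auto
qed

end
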